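(* Let $H$ be a Hermitian operator on $\mathcal{H}=(\mathbb{C}^2)^{\otimes n}$ with eigenvalues $E_1\le E_2\le\cdots\le E_{2^n}$ (with multiplicity) and an orthonormal eigenbasis $|\varphi_1\rangle,\dots,|\varphi_{2^n}\rangle$, $H|\varphi_l\rangle=E_l|\varphi_l\rangle$. Let $E_g=E_1$, $|\Psi_g\rangle=|\varphi_1\rangle$, $\Delta=E_2-E_1$. Let $|\Psi_0\rangle$ be a normalised state with $p_g=|\langle\Psi_g|\Psi_0\rangle|^2>0$. For $\tau>0$ let $|\chi_\tau\rangle=e^{-\frac12(H-E_g)^2\tau^2}|\Psi_0\rangle$ and $E(\tau)=\langle\chi_\tau|H|\chi_\tau\rangle/\langle\chi_\tau|\chi_\tau\rangle$. Then $$E(\tau)-E_g\le\frac{1-p_g}{p_g}\,e^{-\tilde\Delta^2\tau^2}\,\tilde\Delta,\qquad \tilde\Delta=\max\{\Delta,(\sqrt2\,\tau)^{-1}\}.$$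
   Context: In the paper, $|\chi_\tau\rangle$ is (up to a positive scalar factor) the random-circuit variational state obtained from the Hamiltonian ansatz with a specific network configuration, and $E(\tau)$ is its energy. *)

theory Defs
  imports Complex_Main "Jordan_Normal_Form.Schur_Decomposition"
begin

definition mat_exp :: "complex mat \<Rightarrow> complex mat" where
  "mat_exp A = mat (dim_row A) (dim_col A)
     (\<lambda>(i, j). \<Sum>k. (A ^\<^sub>m k) $$ (i, j) / of_nat (fact k))"

text \<open>Dirac bracket  <u|v> = sum_i cnj(u_i) v_i.\<close>
definition braket :: "complex vec \<Rightarrow> complex vec \<Rightarrow> complex" where
  "braket u v = v \<bullet>c u"

end

theory Submission
  imports Defs
begin


lemma braket_sum:
  assumes "u \<in> carrier_vec N" "v \<in> carrier_vec N"
  shows "braket u v = (\<Sum>i<N. v $ i * cnj (u $ i))"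
  using assms unfolding braket_def scalar_prod_def
  by (auto intro!: sum.cong simp: atLeast0LessThan)

lemma completeness:
  fixes \<phi> :: "nat \<Rightarrow> complex vec"
  assumes car: "\<forall>l < N. \<phi> l \<in> carrier_vec N"
    and orth: "\<forall>l < N. \<forall>m < N. braket (\<phi> l) (\<phi> m) = (if l = m then 1 else 0)"
    and i: "i < N" and j: "j < N"
  shows "(\<Sum>l<N. \<phi> l $ i * cnj (\<phi> l $ j)) = (if i = j then 1 else 0)"
proof -
  define U where "U = mat N N (\<lambda>(i,l). \<phi> l $ i)"
  define V where "V = mat N N (\<lambda>(l,j). cnj (\<phi> l $ j))"
  have U: "U \<in> carrier_mat N N" and V: "V \<in> carrier_mat N N" unfolding U_def V_def by auto
  have "V * U = 1\<^sub>m N"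
  proof (rule eq_matI)
    fix l m assume l: "l < dim_row (1\<^sub>m N)" and m: "m < dim_col (1\<^sub>m N)"
    have "(V * U) $$ (l, m) = (\<Sum>j<N. \<phi> m $ j * cnj (\<phi> l $ j))"
      using l m unfolding U_def V_def
      by (auto simp: scalar_prod_def atLeast0LessThan mult.commute intro!: sum.cong)
    also have "\<dots> = braket (\<phi> l) (\<phi> m)" using l m car by (subst braket_sum[of _ N]) auto
    finally show "(V * U) $$ (l, m) = 1\<^sub>m N $$ (l, m)" using l m orth by simp
  qed (use U V in auto)
  hence "U * V = 1\<^sub>m N" using mat_mult_left_right_inverse[OF V U] by simp
  hence "(U * V) $$ (i,j) = (if i = j then 1 else 0)" using i j by simp
  moreover have "(U * V) $$ (i,j) = (\<Sum>l<N. \<phi> l $ i * cnj (\<phi> l $ j))"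
    using i j unfolding U_def V_def
    by (auto simp: scalar_prod_def atLeast0LessThan intro!: sum.cong)
  ultimately show ?thesis by simp
qed

lemma expansion:
  fixes \<phi> :: "nat \<Rightarrow> complex vec"
  assumes car: "\<forall>l < N. \<phi> l \<in> carrier_vec N"
    and orth: "\<forall>l < N. \<forall>m < N. braket (\<phi> l) (\<phi> m) = (if l = m then 1 else 0)"
    and v: "v \<in> carrier_vec N" and i: "i < N"
  shows "v $ i = (\<Sum>l<N. braket (\<phi> l) v * \<phi> l $ i)"
proof -
  have "(\<Sum>l<N. braket (\<phi> l) v * \<phi> l $ i) = (\<Sum>l<N. \<Sum>j<N. v $ j * (\<phi> l $ i * cnj (\<phi> l $ j)))"
    using car v by (auto simp: braket_sum[of _ N] sum_distrib_left mult_ac intro!: sum.cong)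
  also have "\<dots> = (\<Sum>j<N. v $ j * (\<Sum>l<N. \<phi> l $ i * cnj (\<phi> l $ j)))"
    by (subst sum.swap) (simp add: sum_distrib_left)
  also have "\<dots> = (\<Sum>j<N. v $ j * (if i = j then 1 else 0))"
    using completeness[OF car orth i] by simp
  also have "\<dots> = v $ i" using i by (simp add: if_distrib cong: if_cong)
  finally show ?thesis by simp
qed

lemma mat_entry:
  fixes \<phi> :: "nat \<Rightarrow> complex vec"
  assumes car: "\<forall>l < N. \<phi> l \<in> carrier_vec N"
    and orth: "\<forall>l < N. \<forall>m < N. braket (\<phi> l) (\<phi> m) = (if l = m then 1 else 0)"
    and B: "B \<in> carrier_mat N N" and i: "i < N" and j: "j < N"
  shows "B $$ (i,j) = (\<Sum>l<N. (B *\<^sub>v \<phi> l) $ i * cnj (\<phi> l $ j))"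
proof -
  have "(\<Sum>l<N. (B *\<^sub>v \<phi> l) $ i * cnj (\<phi> l $ j)) = (\<Sum>l<N. \<Sum>m<N. B $$ (i,m) * (\<phi> l $ m * cnj (\<phi> l $ j)))"
  proof (rule sum.cong[OF refl])
    fix l assume "l \<in> {..<N}"
    hence d: "dim_vec (\<phi> l) = N" using car by auto
    show "(B *\<^sub>v \<phi> l) $ i * cnj (\<phi> l $ j) = (\<Sum>m<N. B $$ (i,m) * (\<phi> l $ m * cnj (\<phi> l $ j)))"
      using B i d by (auto simp: scalar_prod_def atLeast0LessThan sum_distrib_left mult_ac intro!: sum.cong)
  qed
  also have "\<dots> = (\<Sum>m<N. B $$ (i,m) * (\<Sum>l<N. \<phi> l $ m * cnj (\<phi> l $ j)))"
    by (subst sum.swap) (simp add: sum_distrib_left)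
  also have "\<dots> = (\<Sum>m<N. B $$ (i,m) * (if m = j then 1 else 0))"
    using completeness[OF car orth _ j] by simp
  also have "\<dots> = B $$ (i,j)" using j by (simp add: if_distrib cong: if_cong)
  finally show ?thesis by simp
qed

lemma lin_mult:
  fixes \<phi> :: "nat \<Rightarrow> complex vec"
  assumes car: "\<forall>l < N. \<phi> l \<in> carrier_vec N"
    and B: "B \<in> carrier_mat N N" and w: "w \<in> carrier_vec N"
    and wa: "\<forall>i<N. w $ i = (\<Sum>l<N. a l * \<phi> l $ i)" and i: "i < N"
  shows "(B *\<^sub>v w) $ i = (\<Sum>l<N. a l * (B *\<^sub>v \<phi> l) $ i)"
proof -
  have "(B *\<^sub>v w) $ i = (\<Sum>m<N. B $$ (i,m) * (\<Sum>l<N. a l * \<phi> l $ m))"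
    using B w i wa by (auto simp: scalar_prod_def atLeast0LessThan intro!: sum.cong)
  also have "\<dots> = (\<Sum>l<N. a l * (\<Sum>m<N. B $$ (i,m) * \<phi> l $ m))"
    by (simp add: sum_distrib_left sum_distrib_right mult_ac) (subst sum.swap, simp)
  also have "\<dots> = (\<Sum>l<N. a l * (B *\<^sub>v \<phi> l) $ i)"
    using B car i by (auto simp: scalar_prod_def atLeast0LessThan intro!: sum.cong)
  finally show ?thesis .
qed

lemma parseval:
  fixes \<phi> :: "nat \<Rightarrow> complex vec"
  assumes car: "\<forall>l < N. \<phi> l \<in> carrier_vec N"
    and orth: "\<forall>l < N. \<forall>m < N. braket (\<phi> l) (\<phi> m) = (if l = m then 1 else 0)"
    and u: "u \<in> carrier_vec N" and w: "w \<in> carrier_vec N"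
    and ua: "\<forall>i<N. u $ i = (\<Sum>l<N. a l * \<phi> l $ i)"
    and wb: "\<forall>i<N. w $ i = (\<Sum>l<N. b l * \<phi> l $ i)"
  shows "braket u w = (\<Sum>l<N. b l * cnj (a l))"
proof -
  have "braket u w = (\<Sum>i<N. (\<Sum>l<N. b l * \<phi> l $ i) * (\<Sum>m<N. cnj (a m) * cnj (\<phi> m $ i)))"
    using u w ua wb by (auto simp: braket_sum[of _ N] intro!: sum.cong)
  also have "\<dots> = (\<Sum>i<N. \<Sum>m<N. \<Sum>l<N. b l * (cnj (a m) * (\<phi> l $ i * cnj (\<phi> m $ i))))"
    by (simp add: sum_distrib_left sum_distrib_right mult_ac)
  also have "\<dots> = (\<Sum>m<N. \<Sum>i<N. \<Sum>l<N. b l * (cnj (a m) * (\<phi> l $ i * cnj (\<phi> m $ i))))"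
    by (rule sum.swap)
  also have "\<dots> = (\<Sum>m<N. \<Sum>l<N. \<Sum>i<N. b l * (cnj (a m) * (\<phi> l $ i * cnj (\<phi> m $ i))))"
    by (rule sum.cong[OF refl], rule sum.swap)
  also have "\<dots> = (\<Sum>l<N. \<Sum>m<N. \<Sum>i<N. b l * (cnj (a m) * (\<phi> l $ i * cnj (\<phi> m $ i))))"
    by (rule sum.swap)
  also have "\<dots> = (\<Sum>l<N. \<Sum>m<N. b l * cnj (a m) * (\<Sum>i<N. \<phi> l $ i * cnj (\<phi> m $ i)))"
    by (simp add: sum_distrib_left mult_ac)
  also have "\<dots> = (\<Sum>l<N. \<Sum>m<N. b l * cnj (a m) * (if m = l then 1 else 0))"
    using car orth by (auto simp: braket_sum[of _ N, symmetric] intro!: sum.cong)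
  also have "\<dots> = (\<Sum>l<N. b l * cnj (a l))"
    by (simp add: if_distrib cong: if_cong)
  finally show ?thesis .
qed



lemma exp_sums_c: "(\<lambda>k. (z::complex)^k * c / of_nat (fact k)) sums (exp z * c)"
proof -
  have "(\<lambda>k. z^k /\<^sub>R fact k) sums exp z" by (rule exp_converges)
  hence "(\<lambda>k. z^k /\<^sub>R fact k * c) sums (exp z * c)" by (rule sums_mult2)
  moreover have "\<And>k. z^k /\<^sub>R fact k * c = z^k * c / of_nat (fact k)"
    by (simp add: scaleR_conv_of_real field_simps)
  ultimately show ?thesis by simp
qed

lemma pow_eig:
  fixes M :: "complex mat"
  assumes M: "M \<in> carrier_mat N N" and v: "v \<in> carrier_vec N" and e: "M *\<^sub>v v = d \<cdot>\<^sub>v v"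
  shows "(M ^\<^sub>m k) *\<^sub>v v = (d ^ k) \<cdot>\<^sub>v v"
proof (induction k)
  case 0 then show ?case using v M by simp
next
  case (Suc k)
  have Mk: "M ^\<^sub>m k \<in> carrier_mat N N" using M by simp
  have "(M ^\<^sub>m Suc k) *\<^sub>v v = M ^\<^sub>m k *\<^sub>v (M *\<^sub>v v)" using assoc_mult_mat_vec[OF Mk M v] by simp
  also have "\<dots> = d \<cdot>\<^sub>v (M ^\<^sub>m k *\<^sub>v v)" using e mult_mat_vec[OF Mk v] by simp
  also have "\<dots> = (d ^ Suc k) \<cdot>\<^sub>v v" using Suc by (simp add: smult_smult_assoc mult.commute)
  finally show ?case .
qed

lemma mat_exp_entry:
  fixes \<phi> :: "nat \<Rightarrow> complex vec" and M :: "complex mat"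
  assumes car: "\<forall>l < N. \<phi> l \<in> carrier_vec N"
    and orth: "\<forall>l < N. \<forall>m < N. braket (\<phi> l) (\<phi> m) = (if l = m then 1 else 0)"
    and M: "M \<in> carrier_mat N N" and eig: "\<forall>l<N. M *\<^sub>v \<phi> l = d l \<cdot>\<^sub>v \<phi> l"
    and i: "i < N" and j: "j < N"
  shows "mat_exp M $$ (i,j) = (\<Sum>l<N. exp (d l) * (\<phi> l $ i * cnj (\<phi> l $ j)))"
proof -
  have pk: "(M ^\<^sub>m k) $$ (i,j) = (\<Sum>l<N. d l ^ k * (\<phi> l $ i * cnj (\<phi> l $ j)))" for k
  proof -
    have "(M ^\<^sub>m k) $$ (i,j) = (\<Sum>l<N. ((M ^\<^sub>m k) *\<^sub>v \<phi> l) $ i * cnj (\<phi> l $ j))"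
      by (rule mat_entry[OF car orth _ i j]) (use M in simp)
    also have "\<dots> = (\<Sum>l<N. d l ^ k * (\<phi> l $ i * cnj (\<phi> l $ j)))"
      using car eig i by (auto simp: pow_eig[OF M] intro!: sum.cong)
    finally show ?thesis .
  qed
  have "mat_exp M $$ (i,j) = (\<Sum>k. (M ^\<^sub>m k) $$ (i, j) / of_nat (fact k))"
    using M i j unfolding mat_exp_def by simp
  also have "\<dots> = (\<Sum>k. \<Sum>l<N. d l ^ k * (\<phi> l $ i * cnj (\<phi> l $ j)) / of_nat (fact k))"
    by (simp add: pk sum_divide_distrib)
  also have "\<dots> = (\<Sum>l<N. \<Sum>k. d l ^ k * (\<phi> l $ i * cnj (\<phi> l $ j)) / of_nat (fact k))"
    by (rule suminf_sum, rule sums_summable, rule exp_sums_c)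
  also have "\<dots> = (\<Sum>l<N. exp (d l) * (\<phi> l $ i * cnj (\<phi> l $ j)))"
    by (rule sum.cong[OF refl], rule sums_unique[symmetric], rule exp_sums_c)
  finally show ?thesis .
qed



lemma key_uv:
  fixes u v :: real
  assumes v: "v \<ge> 1/2" and u: "u \<ge> 0" and c: "u \<ge> v \<or> v = 1/2"
  shows "u * exp (-2*u) \<le> v * exp (-2*v)"
proof -
  have vp: "v > 0" using v by simp
  have "u / v \<le> exp (2*(u - v))"
  proof (cases "u \<ge> v")
    case True
    have "u / v \<le> exp (u/v - 1)" using exp_ge_add_one_self[of "u/v - 1"] by simp
    also have "u/v - 1 = (u - v)/v" using vp by (simp add: field_simps)
    also have "(u - v)/v \<le> 2*(u-v)"
    proof -
      have "(u-v)/v = (u-v) * (1/v)" by simp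
      also have "\<dots> \<le> (u-v) * 2" using True v vp
        by (intro mult_left_mono) (auto simp: field_simps)
      finally show ?thesis by simp
    qed
    hence "exp ((u - v)/v) \<le> exp (2*(u-v))" by simp
    finally show ?thesis .
  next
    case False
    hence v2: "v = 1/2" using c by simp
    have "2*u \<le> exp (2*u - 1)" using exp_ge_add_one_self[of "2*u - 1"] by simp
    thus ?thesis by (simp add: v2)
  qed
  hence "u \<le> v * exp (2*(u - v))" using vp by (simp add: field_simps)
  hence "u * exp (-2*u) \<le> v * exp (2*(u - v)) * exp (-2*u)" by (simp add: mult_right_mono)
  also have "\<dots> = v * exp (-2*v)" by (simp add: mult.assoc flip: exp_add) 
  finally show ?thesis .
qed

lemma bump:
  fixes y D \<tau> :: real
  assumes D: "0 \<le> D" "D \<le> y" and \<tau>: "\<tau> > 0"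
  shows "y * exp (- (y^2 * \<tau>^2)) \<le> max D (1 / (sqrt 2 * \<tau>)) * exp (- ((max D (1 / (sqrt 2 * \<tau>)))^2 * \<tau>^2))"
proof -
  define Dt where "Dt = max D (1 / (sqrt 2 * \<tau>))"
  define u where "u = y^2 * \<tau>^2"
  define v where "v = Dt^2 * \<tau>^2"
  have y0: "y \<ge> 0" using D by simp
  have a: "(1 / (sqrt 2 * \<tau>))^2 * \<tau>^2 = 1/2" using \<tau> by (simp add: power_mult_distrib field_simps)
  have Dt0: "Dt \<ge> 1 / (sqrt 2 * \<tau>)" "Dt \<ge> 0" using D \<tau> unfolding Dt_def by auto
  have "Dt^2 \<ge> (1 / (sqrt 2 * \<tau>))^2" using Dt0 \<tau> by (intro power_mono) auto
  hence v: "v \<ge> 1/2" unfolding v_def using a \<tau> by (metis mult_right_mono zero_le_power2)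
  have c: "u \<ge> v \<or> v = 1/2"
  proof (cases "y \<ge> Dt")
    case True
    hence "y^2 \<ge> Dt^2" using Dt0 by (intro power_mono) auto
    thus ?thesis unfolding u_def v_def by (simp add: mult_right_mono)
  next
    case False
    hence "Dt = 1 / (sqrt 2 * \<tau>)" using D unfolding Dt_def by auto
    thus ?thesis unfolding v_def using a by simp
  qed
  have key: "u * exp (-2*u) \<le> v * exp (-2*v)" by (rule key_uv[OF v _ c]) (simp add: u_def)
  have e: "exp (-2*t) = exp (-t)^2" for t :: real
  proof -
    have "exp (-2*t) = exp (-t + -t)" by simp
    also have "\<dots> = exp (-t)^2" by (simp only: exp_add power2_eq_square)
    finally show ?thesis .
  qed
  have k: "u * exp (-u)^2 \<le> v * exp (-v)^2" using key by (simp only: e)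
  have q1: "(y * exp (-u))^2 * \<tau>^2 = u * exp (-u)^2" unfolding u_def by (simp only: power_mult_distrib mult_ac)
  have q2: "(Dt * exp (-v))^2 * \<tau>^2 = v * exp (-v)^2" unfolding v_def by (simp only: power_mult_distrib mult_ac)
  have "(y * exp (-u))^2 * \<tau>^2 \<le> (Dt * exp (-v))^2 * \<tau>^2" using k q1 q2 by linarith
  hence "(y * exp (-u))^2 \<le> (Dt * exp (-v))^2" using \<tau> by simp
  moreover have nn: "0 \<le> Dt * exp (-v)" using Dt0 by simp
  ultimately have "y * exp (-u) \<le> Dt * exp (-v)" by (rule power2_le_imp_le)
  thus ?thesis unfolding u_def v_def Dt_def by simp
qed



lemma smult_mat_vec: "v \<in> carrier_vec (dim_col B) \<Longrightarrow> (c \<cdot>\<^sub>m (B :: complex mat)) *\<^sub>v v = c \<cdot>\<^sub>v (B *\<^sub>v v)"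
  by (rule eq_vecI) (auto simp: scalar_prod_def sum_distrib_left mult.assoc)

lemma final_real:
  fixes q w x :: "nat \<Rightarrow> real" and N :: nat and D \<tau> :: real
  assumes q0: "\<forall>l<N. q l \<ge> 0" and qs: "(\<Sum>l<N. q l) = 1" and qp: "q 0 > 0" and N: "0 < N"
    and x0: "x 0 = 0" and xD: "\<forall>l<N. l \<noteq> 0 \<longrightarrow> x l \<ge> D" and D: "D \<ge> 0" and \<tau>: "\<tau> > 0"
    and w: "\<forall>l<N. w l = exp (- (x l ^ 2 * \<tau> ^ 2))"
  shows "(\<Sum>l<N. w l * q l * x l) / (\<Sum>l<N. w l * q l)
     \<le> (1 - q 0) / q 0 * exp (- ((max D (1 / (sqrt 2 * \<tau>)))^2 * \<tau>^2)) * max D (1 / (sqrt 2 * \<tau>))"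
proof -
  define B where "B = max D (1 / (sqrt 2 * \<tau>)) * exp (- ((max D (1 / (sqrt 2 * \<tau>)))^2 * \<tau>^2))"
  let ?R = "{..<N} - {0}"
  have f: "finite {..<N}" by simp
  have z: "0 \<in> {..<N}" using N by simp
  have T: "(\<Sum>l<N. w l * q l * x l) = (\<Sum>l\<in>?R. w l * q l * x l)"
    using sum.remove[OF f z, of "\<lambda>l. w l * q l * x l"] x0 by simp
  have S: "(\<Sum>l<N. w l * q l) = w 0 * q 0 + (\<Sum>l\<in>?R. w l * q l)"
    using sum.remove[OF f z] by simp
  have Q: "(\<Sum>l\<in>?R. q l) = 1 - q 0"
    using sum.remove[OF f z, of q] qs by simp
  have w0: "w 0 = 1" using w z x0 by simp
  have wpos: "\<forall>l<N. w l > 0" using w by simp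
  have each: "w l * q l * x l \<le> q l * B" if "l \<in> ?R" for l
  proof -
    have l: "l < N" "l \<noteq> 0" using that by auto
    have "w l * x l \<le> B" unfolding B_def using w l bump[of D "x l" \<tau>] xD D \<tau> by (simp add: mult.commute)
    thus ?thesis using q0 l by (metis mult.commute mult.left_commute mult_left_mono)
  qed
  have "(\<Sum>l\<in>?R. w l * q l * x l) \<le> (\<Sum>l\<in>?R. q l * B)" by (rule sum_mono) (rule each)
  also have "\<dots> = (1 - q 0) * B" using Q by (simp add: sum_distrib_right[symmetric])
  finally have Tle: "(\<Sum>l\<in>?R. w l * q l * x l) \<le> (1 - q 0) * B" .
  have Tnn: "(\<Sum>l\<in>?R. w l * q l * x l) \<ge> 0"
  proof (rule sum_nonneg)
    fix l assume "l \<in> ?R"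
    hence l: "l < N" "l \<noteq> 0" by auto
    hence "x l \<ge> 0" using xD D by force
    moreover have "w l \<ge> 0" "q l \<ge> 0" using wpos q0 l by (auto simp: less_imp_le)
    ultimately show "0 \<le> w l * q l * x l" by simp
  qed
  have Sge: "(\<Sum>l<N. w l * q l) \<ge> q 0"
  proof -
    have "(\<Sum>l\<in>?R. w l * q l) \<ge> 0"
    proof (rule sum_nonneg)
      fix l assume "l \<in> ?R"
      hence l: "l < N" by auto
      have "w l \<ge> 0" "q l \<ge> 0" using wpos q0 l by (auto simp: less_imp_le)
      thus "0 \<le> w l * q l" by simp
    qed
    thus ?thesis using S w0 by simp
  qed
  have "(\<Sum>l<N. w l * q l * x l) / (\<Sum>l<N. w l * q l) \<le> (\<Sum>l\<in>?R. w l * q l * x l) / q 0"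
    unfolding T using Tnn Sge qp by (intro divide_left_mono) auto
  also have "\<dots> \<le> (1 - q 0) * B / q 0" using Tle qp by (intro divide_right_mono) auto
  finally show ?thesis unfolding B_def by (simp add: mult_ac)
qed



theorem lemma1:
  fixes n :: nat and H :: "complex mat" and E :: "nat \<Rightarrow> real"
    and \<phi> :: "nat \<Rightarrow> complex vec" and \<Psi>0 :: "complex vec" and \<tau> :: real
  assumes n_pos: "n \<ge> 1"
    and H_carrier: "H \<in> carrier_mat (2^n) (2^n)"
    and H_herm: "mat_adjoint H = H"
    and \<phi>_carrier: "\<forall>l < 2^n. \<phi> l \<in> carrier_vec (2^n)"
    and \<phi>_orthonormal: "\<forall>l < 2^n. \<forall>m < 2^n. braket (\<phi> l) (\<phi> m) = (if l = m then 1 else 0)"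
    and \<phi>_eigen: "\<forall>l < 2^n. H *\<^sub>v \<phi> l = complex_of_real (E l) \<cdot>\<^sub>v \<phi> l"
    and E_sorted: "\<forall>l m. l \<le> m \<longrightarrow> m < 2^n \<longrightarrow> E l \<le> E m"
    and \<Psi>0_carrier: "\<Psi>0 \<in> carrier_vec (2^n)"
    and \<Psi>0_norm: "braket \<Psi>0 \<Psi>0 = 1"
    and pg_pos: "(cmod (braket (\<phi> 0) \<Psi>0))^2 > 0"
    and \<tau>_pos: "\<tau> > 0"
  shows
    "let Eg = E 0; \<Delta> = E 1 - E 0; pg = (cmod (braket (\<phi> 0) \<Psi>0))^2;
         A = H - complex_of_real Eg \<cdot>\<^sub>m 1\<^sub>m (2^n);
         \<chi> = mat_exp (complex_of_real (- (1/2) * \<tau>^2) \<cdot>\<^sub>m (A * A)) *\<^sub>v \<Psi>0;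
         Et = Re (braket \<chi> (H *\<^sub>v \<chi>) / braket \<chi> \<chi>);
         \<Delta>t = max \<Delta> (1 / (sqrt 2 * \<tau>))
     in Et - Eg \<le> (1 - pg) / pg * exp (- (\<Delta>t^2 * \<tau>^2)) * \<Delta>t"
proof -
  define N where "N = (2::nat)^n"
  have N2: "N \<ge> 2" unfolding N_def using n_pos
    by (metis power_increasing power_one_right zero_less_numeral nat_le_linear one_le_numeral)
  have car: "\<forall>l<N. \<phi> l \<in> carrier_vec N" using \<phi>_carrier N_def by simp
  have orth: "\<forall>l < N. \<forall>m < N. braket (\<phi> l) (\<phi> m) = (if l = m then 1 else 0)"
    using \<phi>_orthonormal N_def by simp
  have Hc: "H \<in> carrier_mat N N" using H_carrier N_def by simp
  have Psc: "\<Psi>0 \<in> carrier_vec N" using \<Psi>0_carrier N_def by simp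
  define x where "x l = E l - E 0" for l
  define A where "A = H - complex_of_real (E 0) \<cdot>\<^sub>m 1\<^sub>m N"
  define s where "s = complex_of_real (- (1/2) * \<tau>^2)"
  define M where "M = s \<cdot>\<^sub>m (A * A)"
  define \<chi> where "\<chi> = mat_exp M *\<^sub>v \<Psi>0"
  define c where "c l = braket (\<phi> l) \<Psi>0" for l
  define r where "r l = exp (- (1/2) * \<tau>^2 * x l ^ 2)" for l
  define a where "a l = complex_of_real (r l) * c l" for l
  define q where "q l = (cmod (c l))^2" for l
  have Ac: "A \<in> carrier_mat N N" unfolding A_def by (rule minus_carrier_mat) simp
  have AAc: "A * A \<in> carrier_mat N N" using Ac by simp
  have Mc: "M \<in> carrier_mat N N" unfolding M_def using Ac by simp
  have eigA: "A *\<^sub>v \<phi> l = complex_of_real (x l) \<cdot>\<^sub>v \<phi> l" if l: "l < N" for l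
  proof -
    have v: "\<phi> l \<in> carrier_vec N" using car l by simp
    have 1: "A *\<^sub>v \<phi> l = H *\<^sub>v \<phi> l - (complex_of_real (E 0) \<cdot>\<^sub>m 1\<^sub>m N) *\<^sub>v \<phi> l"
      unfolding A_def using Hc v by (subst minus_mult_distrib_mat_vec[of _ N N]) auto
    have 2: "(complex_of_real (E 0) \<cdot>\<^sub>m 1\<^sub>m N) *\<^sub>v \<phi> l = complex_of_real (E 0) \<cdot>\<^sub>v \<phi> l"
      using v by (subst smult_mat_vec) auto
    have 3: "H *\<^sub>v \<phi> l = complex_of_real (E l) \<cdot>\<^sub>v \<phi> l" using \<phi>_eigen l N_def by simp
    show ?thesis unfolding 1 2 3 x_def using v by (intro eq_vecI) (auto simp: algebra_simps)
  qed
  define d where "d l = s * complex_of_real (x l) ^ 2" for l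
  have eigM: "\<forall>l<N. M *\<^sub>v \<phi> l = d l \<cdot>\<^sub>v \<phi> l"
  proof (intro allI impI)
    fix l assume l: "l < N"
    have v: "\<phi> l \<in> carrier_vec N" using car l by simp
    have "M *\<^sub>v \<phi> l = s \<cdot>\<^sub>v ((A * A) *\<^sub>v \<phi> l)" unfolding M_def using v AAc by (subst smult_mat_vec) auto
    also have "(A * A) *\<^sub>v \<phi> l = A *\<^sub>v (A *\<^sub>v \<phi> l)" using Ac v by simp
    also have "A *\<^sub>v (A *\<^sub>v \<phi> l) = complex_of_real (x l) \<cdot>\<^sub>v (complex_of_real (x l) \<cdot>\<^sub>v \<phi> l)"
      by (simp only: eigA[OF l] mult_mat_vec[OF Ac v])
    finally show "M *\<^sub>v \<phi> l = d l \<cdot>\<^sub>v \<phi> l" unfolding d_def using v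
      by (intro eq_vecI) (auto simp: algebra_simps power2_eq_square)
  qed
  have expd: "exp (d l) = complex_of_real (r l)" for l
  proof -
    have dl: "d l = complex_of_real (- (1/2) * \<tau>^2 * x l ^ 2)" unfolding d_def s_def by simp
    show ?thesis unfolding dl exp_of_real r_def ..
  qed
  have me: "mat_exp M $$ (i,j) = (\<Sum>l<N. complex_of_real (r l) * (\<phi> l $ i * cnj (\<phi> l $ j)))"
    if "i < N" "j < N" for i j
    using mat_exp_entry[OF car orth Mc eigM that] by (simp add: expd)
  have medim: "mat_exp M \<in> carrier_mat N N" using Mc unfolding mat_exp_def by auto
  have \<chi>c: "\<chi> \<in> carrier_vec N" unfolding \<chi>_def by (rule mult_mat_vec_carrier[OF medim Psc])
  have \<chi>e: "\<forall>i<N. \<chi> $ i = (\<Sum>l<N. a l * \<phi> l $ i)"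
  proof (intro allI impI)
    fix i assume i: "i < N"
    have "\<chi> $ i = (\<Sum>j<N. mat_exp M $$ (i,j) * \<Psi>0 $ j)"
      unfolding \<chi>_def using medim Psc i by (auto simp: scalar_prod_def atLeast0LessThan intro!: sum.cong)
    also have "\<dots> = (\<Sum>j<N. \<Sum>l<N. complex_of_real (r l) * \<phi> l $ i * (\<Psi>0 $ j * cnj (\<phi> l $ j)))"
      using i by (auto simp: me sum_distrib_left mult_ac intro!: sum.cong)
    also have "\<dots> = (\<Sum>l<N. complex_of_real (r l) * \<phi> l $ i * (\<Sum>j<N. \<Psi>0 $ j * cnj (\<phi> l $ j)))"
      by (subst sum.swap) (simp add: sum_distrib_left)
    also have "\<dots> = (\<Sum>l<N. a l * \<phi> l $ i)"
      unfolding a_def c_def using car Psc by (auto simp: braket_sum[of _ N] mult_ac intro!: sum.cong)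
    finally show "\<chi> $ i = (\<Sum>l<N. a l * \<phi> l $ i)" .
  qed
  have H\<chi>c: "H *\<^sub>v \<chi> \<in> carrier_vec N" by (rule mult_mat_vec_carrier[OF Hc \<chi>c])
  have H\<chi>e: "\<forall>i<N. (H *\<^sub>v \<chi>) $ i = (\<Sum>l<N. (a l * complex_of_real (E l)) * \<phi> l $ i)"
  proof (intro allI impI)
    fix i assume i: "i < N"
    have "(H *\<^sub>v \<chi>) $ i = (\<Sum>l<N. a l * (H *\<^sub>v \<phi> l) $ i)"
      by (rule lin_mult[OF car Hc \<chi>c \<chi>e i])
    also have "\<dots> = (\<Sum>l<N. (a l * complex_of_real (E l)) * \<phi> l $ i)"
      using \<phi>_eigen car i N_def by (auto intro!: sum.cong)
    finally show "(H *\<^sub>v \<chi>) $ i = (\<Sum>l<N. (a l * complex_of_real (E l)) * \<phi> l $ i)" .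
  qed
  have acnj: "a l * cnj (a l) = complex_of_real (r l ^ 2 * q l)" for l
  proof -
    have "a l * cnj (a l) = complex_of_real (r l ^ 2) * (c l * cnj (c l))"
      unfolding a_def by (simp add: power2_eq_square mult_ac)
    also have "c l * cnj (c l) = complex_of_real (q l)" unfolding q_def by (rule complex_norm_square[symmetric])
    finally show ?thesis by simp
  qed
  have b1: "braket \<chi> \<chi> = complex_of_real (\<Sum>l<N. r l ^ 2 * q l)"
    using parseval[OF car orth \<chi>c \<chi>c \<chi>e \<chi>e] by (simp add: acnj)
  have b2: "braket \<chi> (H *\<^sub>v \<chi>) = complex_of_real (\<Sum>l<N. r l ^ 2 * q l * E l)"
  proof -
    have "braket \<chi> (H *\<^sub>v \<chi>) = (\<Sum>l<N. (a l * complex_of_real (E l)) * cnj (a l))"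
      by (rule parseval[OF car orth \<chi>c H\<chi>c \<chi>e H\<chi>e])
    also have "\<dots> = (\<Sum>l<N. complex_of_real (E l) * (a l * cnj (a l)))"
      by (rule sum.cong[OF refl]) (simp add: mult_ac)
    also have "\<dots> = (\<Sum>l<N. complex_of_real (r l ^ 2 * q l * E l))"
      by (rule sum.cong[OF refl]) (simp add: acnj mult_ac)
    finally show ?thesis by simp
  qed
  have qs: "(\<Sum>l<N. q l) = 1"
  proof -
    have Pe: "\<forall>i<N. \<Psi>0 $ i = (\<Sum>l<N. c l * \<phi> l $ i)"
      using expansion[OF car orth Psc] unfolding c_def by simp
    have "braket \<Psi>0 \<Psi>0 = (\<Sum>l<N. c l * cnj (c l))" by (rule parseval[OF car orth Psc Psc Pe Pe])
    also have "\<dots> = complex_of_real (\<Sum>l<N. q l)" by (simp only: of_real_sum q_def complex_norm_square)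
    finally have "braket \<Psi>0 \<Psi>0 = complex_of_real (\<Sum>l<N. q l)" .
    hence "complex_of_real (\<Sum>l<N. q l) = 1" using \<Psi>0_norm by metis
    thus ?thesis by (metis of_real_eq_1_iff)
  qed
  have q0: "\<forall>l<N. q l \<ge> 0" by (simp add: q_def)
  have qp: "q 0 > 0" using pg_pos unfolding q_def c_def .
  have Np: "0 < N" using N2 by simp
  have x0: "x 0 = 0" by (simp add: x_def)
  have D0: "E 1 - E 0 \<ge> 0" using E_sorted N2 unfolding N_def by auto
  have xD: "\<forall>l<N. l \<noteq> 0 \<longrightarrow> x l \<ge> E 1 - E 0" using E_sorted unfolding x_def N_def by auto
  have w: "\<forall>l<N. r l ^ 2 = exp (- (x l ^ 2 * \<tau> ^ 2))"
  proof (intro allI impI)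
    fix l
    have "r l ^ 2 = exp (- (1/2) * \<tau>^2 * x l ^ 2 + - (1/2) * \<tau>^2 * x l ^ 2)"
      unfolding r_def by (simp only: exp_add power2_eq_square)
    also have "\<dots> = exp (- (x l ^ 2 * \<tau> ^ 2))" by (simp add: algebra_simps)
    finally show "r l ^ 2 = exp (- (x l ^ 2 * \<tau> ^ 2))" .
  qed
  have fr: "(\<Sum>l<N. r l ^ 2 * q l * x l) / (\<Sum>l<N. r l ^ 2 * q l)
     \<le> (1 - q 0) / q 0 * exp (- ((max (E 1 - E 0) (1 / (sqrt 2 * \<tau>)))^2 * \<tau>^2)) * max (E 1 - E 0) (1 / (sqrt 2 * \<tau>))"
    by (rule final_real[OF q0 qs qp Np x0 xD D0 \<tau>_pos w])
  have r0: "r 0 = 1" by (simp add: r_def x_def)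
  have Spos: "(\<Sum>l<N. r l ^ 2 * q l) > 0"
  proof -
    have "r 0 ^ 2 * q 0 \<le> (\<Sum>l<N. r l ^ 2 * q l)"
      by (rule member_le_sum) (use Np q0 in auto)
    thus ?thesis using r0 qp by simp
  qed
  have Et: "Re (braket \<chi> (H *\<^sub>v \<chi>) / braket \<chi> \<chi>) = (\<Sum>l<N. r l ^ 2 * q l * E l) / (\<Sum>l<N. r l ^ 2 * q l)"
    unfolding b1 b2 by (simp flip: of_real_divide)
  have num: "(\<Sum>l<N. r l ^ 2 * q l * E l) - E 0 * (\<Sum>l<N. r l ^ 2 * q l) = (\<Sum>l<N. r l ^ 2 * q l * x l)"
    unfolding x_def by (simp add: sum_distrib_left sum_subtractf[symmetric] algebra_simps)
  have main: "Re (braket \<chi> (H *\<^sub>v \<chi>) / braket \<chi> \<chi>) - E 0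
     \<le> (1 - q 0) / q 0 * exp (- ((max (E 1 - E 0) (1 / (sqrt 2 * \<tau>)))^2 * \<tau>^2)) * max (E 1 - E 0) (1 / (sqrt 2 * \<tau>))"
  proof -
    have "Re (braket \<chi> (H *\<^sub>v \<chi>) / braket \<chi> \<chi>) - E 0 = (\<Sum>l<N. r l ^ 2 * q l * x l) / (\<Sum>l<N. r l ^ 2 * q l)"
      unfolding Et num[symmetric] using Spos by (simp add: field_simps)
    thus ?thesis using fr by simp
  qed
  show ?thesis using main unfolding Let_def \<chi>_def M_def A_def s_def N_def q_def c_def .
qed

end
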